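(* Let $\eta\in\partial A_*$ and let $z\in\Lambda$ be such that $c_z(\eta)=1$ and $\eta^z\notin A_*$. Let $I=[a,b]\subseteq\{0,1,\dots,L\}$ be an integer interval containing $z$ and $z-1$, let $\ell=b-a$, $I_-=(a-\ell,a)\cap\{0,\dots,L\}$, $I_+=(b,b+\ell]\cap\{0,\dots,L\}$. Then either $I=\{0,1,\dots,L\}$, or $\eta$ (with the convention $\eta_0=0$) has at least one zero in $I_-\cup I_+$.
   Context: Fix $q\in(0,1/2)$, $\Lambda=\{1,\dots,L\}$, $\Omega_\Lambda=\{0,1\}^\Lambda$. East constraints: $c_1\equiv1$, $c_x(\sigma)=1-\sigma_{x-1}$ for $x\ge2$; $\eta^x$ is $\eta$ with the spin at $x$ flipped. Deterministic dynamics: set $\eta_0:=0$. The gap at $x$ is $g_x(\eta)=\min\{d>0:\eta_{x-d}=0\}$. For $(d,x)\in\{1,\dots,L\}^2$, $\phi_{d,x}(\eta)$ sets $\eta_x=1$ if $\eta_x=0$ and $g_x(\eta)=d$, otherwise leaves $\eta$ unchanged. Order $\{1,\dots,L\}^2$ by $(d_1,x_1)\prec(d_2,x_2)$ iff $d_1<d_2$, or $d_1=d_2$ and $x_1>x_2$; list it as $\alpha_1\prec\dots\prec\alpha_{L^2}$, set $\eta[0]=\eta$, $\eta[k]=\phi_{\alpha_k}(\eta[k-1])$, and write $\Phi(\eta;d,x)=\eta[k]$ when $\alpha_k=(d,x)$. $A_*=\{\eta:\Phi(\eta;L-1,1)=\mathbb 10\}$, with $\mathbb 10$ having $\sigma_x=1$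 for $x<L$, $\sigma_L=0$. $\partial A_*=\{\eta\in A_*:\exists\,x\in\Lambda$ with $c_x(\eta)=1$ and $\eta^x\notin A_*\}$. *)

theory Defs
  imports Main
begin

text \<open>Configurations on Lambda = {1..L}, encoded as nat => bool (True = spin 1),
  vanishing outside {1..L}; in particular eta 0 = False (the convention eta_0 = 0).\<close>
definition Omega :: "nat \<Rightarrow> (nat \<Rightarrow> bool) set" where
  "Omega L = {\<eta>. \<forall>x. x \<notin> {1..L} \<longrightarrow> \<not> \<eta> x}"

definition flip :: "(nat \<Rightarrow> bool) \<Rightarrow> nat \<Rightarrow> (nat \<Rightarrow> bool)" where
  "flip \<eta> x = \<eta>(x := \<not> \<eta> x)"

definition constr :: "nat \<Rightarrow> (nat \<Rightarrow> bool) \<Rightarrow> bool" where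
  "constr x \<eta> = (x = 1 \<or> \<not> \<eta> (x - 1))"

definition gap :: "(nat \<Rightarrow> bool) \<Rightarrow> nat \<Rightarrow> nat" where
  "gap \<eta> x = (LEAST d. 0 < d \<and> \<not> \<eta> (x - d))"

definition phi :: "nat \<Rightarrow> nat \<Rightarrow> (nat \<Rightarrow> bool) \<Rightarrow> (nat \<Rightarrow> bool)" where
  "phi d x \<eta> = (if \<not> \<eta> x \<and> gap \<eta> x = d then \<eta>(x := True) else \<eta>)"

definition prec_eq :: "nat \<times> nat \<Rightarrow> nat \<times> nat \<Rightarrow> bool" where
  "prec_eq a b = (fst a < fst b \<or> (fst a = fst b \<and> snd a \<ge> snd b))"

text \<open>The list alpha_1 < ... < alpha_{L^2} of {1..L}^2 in increasing order.\<close>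
definition alphas :: "nat \<Rightarrow> (nat \<times> nat) list" where
  "alphas L = concat (map (\<lambda>d. map (\<lambda>x. (d, x)) (rev [1..<L+1])) [1..<L+1])"

text \<open>Phi(eta; d, x) = eta[k] where alpha_k = (d,x): apply phi_{alpha_1}, ..., phi_{alpha_k}.\<close>
definition Phi :: "nat \<Rightarrow> (nat \<Rightarrow> bool) \<Rightarrow> nat \<Rightarrow> nat \<Rightarrow> (nat \<Rightarrow> bool)" where
  "Phi L \<eta> d x = fold (\<lambda>\<alpha> \<sigma>. phi (fst \<alpha>) (snd \<alpha>) \<sigma>)
      (filter (\<lambda>\<alpha>. prec_eq \<alpha> (d, x)) (alphas L)) \<eta>"

definition one_zero :: "nat \<Rightarrow> (nat \<Rightarrow> bool)" where
  "one_zero L = (\<lambda>x. 1 \<le> x \<and> x < L)"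

definition Astar :: "nat \<Rightarrow> (nat \<Rightarrow> bool) set" where
  "Astar L = {\<eta> \<in> Omega L. Phi L \<eta> (L - 1) 1 = one_zero L}"

definition boundaryAstar :: "nat \<Rightarrow> (nat \<Rightarrow> bool) set" where
  "boundaryAstar L = {\<eta> \<in> Astar L. \<exists>x \<in> {1..L}. constr x \<eta> \<and> flip \<eta> x \<notin> Astar L}"

end

theory Submission
  imports Defs
begin

lemma gap_eq_iff:
  assumes "\<not> \<sigma> 0"
  shows "(gap \<sigma> y = d) = (0 < d \<and> \<not> \<sigma> (y - d) \<and> (\<forall>j. 0 < j \<and> j < d \<longrightarrow> \<sigma> (y - j)))"
proof -
  let ?P = "\<lambda>d. 0 < d \<and> \<not> \<sigma> (y - d)"
  have ex: "?P (Suc y)" using assms by simp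
  show ?thesis
  proof
    assume g: "gap \<sigma> y = d"
    have "?P (Least ?P)" using LeastI[of ?P, OF ex] .
    moreover have "\<forall>j. j < Least ?P \<longrightarrow> \<not> ?P j" using not_less_Least by blast
    ultimately show "0 < d \<and> \<not> \<sigma> (y - d) \<and> (\<forall>j. 0 < j \<and> j < d \<longrightarrow> \<sigma> (y - j))"
      using g unfolding gap_def by auto
  next
    assume h: "0 < d \<and> \<not> \<sigma> (y - d) \<and> (\<forall>j. 0 < j \<and> j < d \<longrightarrow> \<sigma> (y - j))"
    show "gap \<sigma> y = d" unfolding gap_def
      by (rule Least_equality) (use h in \<open>auto simp: not_less[symmetric]\<close>)
  qed
qed

lemma gap_local:
  assumes "\<forall>i<y. \<sigma> i = \<tau> i" "0 < y"
  shows "gap \<sigma> y = gap \<tau> y"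
proof -
  have "(\<lambda>d. 0 < d \<and> \<not> \<sigma> (y - d)) = (\<lambda>d. 0 < d \<and> \<not> \<tau> (y - d))"
    using assms by (auto intro!: ext)
  then show ?thesis unfolding gap_def by simp
qed

definition Sst :: "nat \<Rightarrow> nat \<Rightarrow> (nat \<Rightarrow> bool) \<Rightarrow> (nat \<Rightarrow> bool)" where
  "Sst L d \<sigma> = (\<lambda>y. if 1 \<le> y \<and> y \<le> L then \<sigma> y \<or> gap \<sigma> y = d else \<sigma> y)"

primrec it :: "nat \<Rightarrow> (nat \<Rightarrow> bool) \<Rightarrow> nat \<Rightarrow> (nat \<Rightarrow> bool)" where
  "it L \<sigma> 0 = \<sigma>"
| "it L \<sigma> (Suc k) = Sst L (Suc k) (it L \<sigma> k)"

lemma phi_upd: "phi d x \<sigma> = \<sigma>(x := (\<sigma> x \<or> gap \<sigma> x = d))"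
  unfolding phi_def by (rule ext) (auto simp: fun_upd_def)

lemma fold_phi:
  "sorted_wrt (>) xs \<Longrightarrow> (\<forall>x\<in>set xs. 0 < x) \<Longrightarrow>
   fold (\<lambda>x \<sigma>. phi d x \<sigma>) xs \<sigma> = (\<lambda>y. if y \<in> set xs then \<sigma> y \<or> gap \<sigma> y = d else \<sigma> y)"
proof (induction xs arbitrary: \<sigma>)
  case Nil
  then show ?case by simp
next
  case (Cons x xs)
  let ?s = "\<sigma>(x := (\<sigma> x \<or> gap \<sigma> x = d))"
  have IH: "fold (\<lambda>x \<sigma>. phi d x \<sigma>) xs ?s = (\<lambda>y. if y \<in> set xs then ?s y \<or> gap ?s y = d else ?s y)"
    by (rule Cons.IH) (use Cons.prems in auto)
  have st: "fold (\<lambda>x \<sigma>. phi d x \<sigma>) (x # xs) \<sigma> = fold (\<lambda>x \<sigma>. phi d x \<sigma>) xs ?s"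
    by (simp add: phi_upd)
  have "\<And>y. y \<in> set xs \<Longrightarrow> gap ?s y = gap \<sigma> y"
    by (rule gap_local) (use Cons.prems in auto)
  moreover have "\<And>y. y \<in> set xs \<Longrightarrow> y \<noteq> x" using Cons.prems by auto
  ultimately show ?case unfolding st IH by (auto simp: phi_upd intro!: ext)
qed

lemma stage_eq: "fold (\<lambda>x \<sigma>. phi d x \<sigma>) (rev [1..<L+1]) \<sigma> = Sst L d \<sigma>"
proof -
  have "sorted_wrt (<) [1..<L+1]" by (rule sorted_wrt_upt)
  then have "sorted_wrt (>) (rev [1..<L+1])" by (simp only: sorted_wrt_rev)
  then show ?thesis by (subst fold_phi) (auto simp: Sst_def intro!: ext)
qed

lemma fold_concat': "fold f (concat xss) s = fold (\<lambda>xs. fold f xs) xss s"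
  by (induction xss arbitrary: s) auto

lemma fold_it: "fold (Sst L) [1..<k+1] \<sigma> = it L \<sigma> k"
  by (induction k) auto

lemma Phi_it:
  assumes "2 \<le> L"
  shows "Phi L \<eta> (L - 1) 1 = it L \<eta> (L - 1)"
proof -
  define row where "row d = map (\<lambda>x. (d, x)) (rev [1..<L+1])" for d :: nat
  define P where "P = (\<lambda>\<alpha>. prec_eq \<alpha> (L - 1, 1))"
  have al: "alphas L = concat (map row [1..<L+1])" unfolding alphas_def row_def by simp
  have u: "[1..<L+1] = [1..<L] @ [L]" using assms by simp
  have rL: "filter P (row L) = []" unfolding row_def P_def prec_eq_def using assms
    by (auto simp: filter_empty_conv)
  have rd: "map (filter P \<circ> row) [1..<L] = map row [1..<L]"
    by (rule map_cong) (auto simp: row_def P_def prec_eq_def intro!: filter_True)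
  have "filter P (alphas L) = concat (map row [1..<L])"
    unfolding al filter_concat u map_append map_map rd using rL by simp
  then have "Phi L \<eta> (L - 1) 1 = fold (\<lambda>xs. fold (\<lambda>\<alpha> \<sigma>. phi (fst \<alpha>) (snd \<alpha>) \<sigma>) xs) (map row [1..<L]) \<eta>"
    unfolding Phi_def P_def by (simp add: fold_concat')
  also have "\<dots> = fold (Sst L) [1..<L] \<eta>"
    unfolding fold_map
    by (rule fold_cong) (auto simp: row_def fold_map comp_def stage_eq[symmetric] intro!: ext)
  also have "\<dots> = it L \<eta> (L - 1)" using fold_it[of L "L - 1" \<eta>] assms by simp
  finally show ?thesis .
qed


lemma it_zero: "\<not> \<sigma> 0 \<Longrightarrow> \<not> it L \<sigma> k 0"
  by (induction k) (auto simp: Sst_def)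

lemma Sst_mono: "\<sigma> y \<Longrightarrow> Sst L d \<sigma> y"
  by (auto simp: Sst_def)

lemma it_mono: "\<sigma> y \<Longrightarrow> it L \<sigma> k y"
  by (induction k) (auto simp: Sst_mono)

lemma it_inv:
  "\<not> \<sigma> 0 \<Longrightarrow> 1 \<le> y \<Longrightarrow> y \<le> L \<Longrightarrow> \<not> it L \<sigma> k y \<Longrightarrow> 0 < j \<Longrightarrow> j \<le> k \<Longrightarrow> it L \<sigma> k (y - j)"
proof (induction k arbitrary: j)
  case 0
  then show ?case by simp
next
  case (Suc k)
  let ?t = "it L \<sigma> k"
  have ny: "\<not> ?t y" and ng: "gap ?t y \<noteq> Suc k" using Suc.prems by (auto simp: Sst_def)
  have IH: "\<And>j. 0 < j \<Longrightarrow> j \<le> k \<Longrightarrow> ?t (y - j)" using Suc.IH Suc.prems ny by blast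
  show ?case
  proof (cases "j \<le> k")
    case True
    then show ?thesis using IH Suc.prems by (auto intro: Sst_mono)
  next
    case False
    then have j: "j = Suc k" using Suc.prems by simp
    show ?thesis
    proof (cases "?t (y - Suc k)")
      case True
      then show ?thesis using j by (auto intro: Sst_mono)
    next
      case False
      have "gap ?t y = Suc k"
        using False IH it_zero[where \<sigma>=\<sigma>, OF Suc.prems(1)] by (subst gap_eq_iff) auto
      then show ?thesis using ng by simp
    qed
  qed
qed

lemma Sst_local:
  assumes "\<not> \<sigma> 0" "\<not> \<tau> 0" "\<forall>i. y - d \<le> i \<and> i \<le> y \<longrightarrow> \<sigma> i = \<tau> i"
  shows "Sst L d \<sigma> y = Sst L d \<tau> y"
proof -
  have h: "\<forall>j. j \<le> d \<longrightarrow> \<sigma> (y - j) = \<tau> (y - j)"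
    using assms(3) by (auto intro: diff_le_mono2)
  have "\<sigma> y = \<tau> y" using assms(3) by simp
  moreover have "(gap \<sigma> y = d) = (gap \<tau> y = d)"
    using h by (simp add: gap_eq_iff[where \<sigma>=\<sigma>, OF assms(1)] gap_eq_iff[where \<sigma>=\<tau>, OF assms(2)])
  ultimately show ?thesis by (simp add: Sst_def)
qed

lemma middle:
  assumes "\<not> \<rho> 0" "1 \<le> l" "\<not> \<rho> yf"
    and "yf = 0 \<or> (l \<le> a \<and> a \<le> yf \<and> (\<forall>x. a - l < x \<and> x < yf \<longrightarrow> \<rho> x))"
    and "yf < y" "y - yf \<le> l" "y \<le> L"
  shows "it L \<rho> l y"
proof -
  have A: "k < l \<Longrightarrow> \<not> it L \<rho> k yf" for k
  proof (induction k)
    case 0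
    then show ?case using assms by simp
  next
    case (Suc k)
    show ?case
    proof (cases "yf = 0")
      case True
      then show ?thesis using it_zero assms(1) by blast
    next
      case False
      then have c: "l \<le> a" "a \<le> yf" "\<forall>x. a - l < x \<and> x < yf \<longrightarrow> \<rho> x" using assms(4) by auto
      have "\<rho> (yf - Suc k)" using c Suc.prems by (intro c(3)[rule_format]) auto
      then have "it L \<rho> k (yf - Suc k)" by (rule it_mono)
      then have "gap (it L \<rho> k) yf \<noteq> Suc k"
        using gap_eq_iff[where \<sigma>="it L \<rho> k", OF it_zero[where \<sigma>=\<rho>, OF assms(1)]] by blast
      then show ?thesis using Suc by (auto simp: Sst_def)
    qed
  qed
  obtain m where m: "l = Suc m" using assms(2) by (cases l) auto
  show ?thesis
  proof (cases "it L \<rho> m y")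
    case True
    then show ?thesis using m by (auto intro: Sst_mono)
  next
    case False
    have y1: "1 \<le> y" using assms by simp
    have inv: "\<And>j. 0 < j \<Longrightarrow> j \<le> m \<Longrightarrow> it L \<rho> m (y - j)"
      using it_inv[OF assms(1) y1 assms(7) False] by blast
    have nf: "\<not> it L \<rho> m yf" using A m by simp
    have "y - yf = Suc m"
    proof (rule ccontr)
      assume "y - yf \<noteq> Suc m"
      then have "y - yf \<le> m" using assms(6) m by simp
      then have "it L \<rho> m (y - (y - yf))" by (intro inv) (use assms(5) in auto)
      then show False using nf assms(5) by simp
    qed
    then have "y - Suc m = yf" by simp
    then have "gap (it L \<rho> m) y = Suc m"
      using nf inv by (subst gap_eq_iff[where \<sigma>="it L \<rho> m", OF it_zero[where \<sigma>=\<rho>, OF assms(1)]]) auto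
    then show ?thesis using m y1 assms(7) by (simp add: Sst_def)
  qed
qed

theorem mainTheorem15:
  fixes L z a b :: nat and \<eta> :: "nat \<Rightarrow> bool"
  assumes "2 \<le> L"
    and "\<eta> \<in> boundaryAstar L"
    and "z \<in> {1..L}" and "constr z \<eta>" and "flip \<eta> z \<notin> Astar L"
    and "a \<le> b" and "b \<le> L"
    and "z \<in> {a..b}" and "z - 1 \<in> {a..b}"
  shows "({a..b} = {0..L}) \<or>
         (\<exists>x \<in> {x. int a - int (b - a) < int x \<and> x < a \<and> x \<le> L}
               \<union> {x. b < x \<and> x \<le> b + (b - a) \<and> x \<le> L}. \<not> \<eta> x)"
proof (rule ccontr)
  assume neg: "\<not> ?thesis"
  then have ne: "{a..b} \<noteq> {0..L}"
    and H: "\<And>x. (int a - int (b - a) < int x \<and> x < a \<and> x \<le> L) \<or> (b < x \<and> x \<le> b + (b - a) \<and> x \<le> L) \<Longrightarrow> \<eta> x"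
    by auto
  define l where "l = b - a"
  have etaA: "\<eta> \<in> Astar L" using assms(2) by (simp add: boundaryAstar_def)
  then have etaO: "\<eta> \<in> Omega L" by (simp add: Astar_def)
  then have out: "\<And>x. x \<notin> {1..L} \<Longrightarrow> \<not> \<eta> x" by (simp add: Omega_def)
  have e0: "\<not> \<eta> 0" using out by simp
  have z1: "\<not> \<eta> (z - 1)" using assms(4) e0 by (auto simp: constr_def)
  have z0: "1 \<le> z" "z \<le> L" using assms(3) by auto
  have l1: "1 \<le> l" using assms(8,9) z0 by (auto simp: l_def)
  have lL: "l \<le> L - 1"
  proof (rule ccontr)
    assume "\<not> l \<le> L - 1"
    then have "a = 0" "b = L" using assms(7) by (auto simp: l_def)
    then show False using ne by simp
  qed
  have aL: "a = 0 \<or> l \<le> a"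
  proof (rule ccontr)
    assume "\<not> (a = 0 \<or> l \<le> a)"
    then have "\<eta> 0" using H[of 0] by (auto simp: l_def)
    then show False using e0 by simp
  qed
  define \<eta>' where "\<eta>' = flip \<eta> z"
  have e': "\<And>y. y \<noteq> z \<Longrightarrow> \<eta>' y = \<eta> y" by (simp add: \<eta>'_def flip_def)
  have e'0: "\<not> \<eta>' 0" using e' e0 z0 by simp
  define yf where "yf = (LEAST y. a \<le> y \<and> \<not> \<eta> y)"
  have yfP: "a \<le> yf \<and> \<not> \<eta> yf" unfolding yf_def
    by (rule LeastI[of _ "z - 1"]) (use z1 assms(9) in auto)
  have yfz: "yf \<le> z - 1" unfolding yf_def
    by (rule Least_le) (use z1 assms(9) in auto)
  have yfl: "\<And>x. a \<le> x \<Longrightarrow> x < yf \<Longrightarrow> \<eta> x" unfolding yf_def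
    using not_less_Least by blast
  have yf0: "a = 0 \<Longrightarrow> yf = 0" unfolding yf_def
    using Least_le[of "\<lambda>y. a \<le> y \<and> \<not> \<eta> y" 0] e0 by simp
  have cond: "yf = 0 \<or> (l \<le> a \<and> a \<le> yf \<and> (\<forall>x. a - l < x \<and> x < yf \<longrightarrow> \<eta> x))"
  proof (cases "a = 0")
    case True then show ?thesis using yf0 by simp
  next
    case False
    then have la: "l \<le> a" using aL by simp
    have "\<eta> x" if "a - l < x" "x < yf" for x
    proof (cases "x < a")
      case True
      then show ?thesis using H[of x] that la assms(6,7) by (auto simp: l_def)
    next
      case False
      then show ?thesis using yfl that by simp
    qed
    then show ?thesis using la yfP by auto
  qed
  have cond': "yf = 0 \<or> (l \<le> a \<and> a \<le> yf \<and> (\<forall>x. a - l < x \<and> x < yf \<longrightarrow> \<eta>' x))"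
    using cond yfz z0 e' by force
  have ny': "\<not> \<eta>' yf" using yfP yfz z0 e' by force
  have left: "\<And>y. y < z \<Longrightarrow> it L \<eta> k y = it L \<eta>' k y" for k
  proof (induction k)
    case 0
    then show ?case using e' by simp
  next
    case (Suc k)
    have "\<forall>i. y - Suc k \<le> i \<and> i \<le> y \<longrightarrow> it L \<eta> k i = it L \<eta>' k i"
      using Suc by auto
    then show ?case using Sst_local[where \<sigma>="it L \<eta> k" and \<tau>="it L \<eta>' k", OF it_zero[where \<sigma>=\<eta>, OF e0] it_zero[where \<sigma>=\<eta>', OF e'0]] by simp
  qed
  have right: "k \<le> l \<Longrightarrow> \<forall>y. b < y \<longrightarrow> it L \<eta> k y = it L \<eta>' k y" for k
  proof (induction k)
    case 0
    then show ?case using e' assms(8) by auto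
  next
    case (Suc k)
    have IH: "\<And>y. b < y \<Longrightarrow> it L \<eta> k y = it L \<eta>' k y" using Suc by simp
    show ?case
    proof (intro allI impI)
      fix y assume hby: "b < y"
      show "it L \<eta> (Suc k) y = it L \<eta>' (Suc k) y"
      proof (cases "it L \<eta> k y")
        case True
        then show ?thesis using IH[OF hby] by (auto intro: Sst_mono)
      next
        case False
        show ?thesis
        proof (cases "y \<le> L")
          case False
          then show ?thesis using IH[OF hby] by (simp add: Sst_def)
        next
          case True
          have "\<not> \<eta> y" using \<open>\<not> it L \<eta> k y\<close> it_mono by blast
          then have "b + l < y" using H[of y] True hby by (force simp: l_def)
          then have "\<forall>i. y - Suc k \<le> i \<and> i \<le> y \<longrightarrow> it L \<eta> k i = it L \<eta>' k i"
            using IH Suc.prems by auto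
          then show ?thesis
            using Sst_local[where \<sigma>="it L \<eta> k" and \<tau>="it L \<eta>' k", OF it_zero[where \<sigma>=\<eta>, OF e0] it_zero[where \<sigma>=\<eta>', OF e'0]] by simp
        qed
      qed
    qed
  qed
  have eq: "it L \<eta> l = it L \<eta>' l"
  proof
    fix y
    show "it L \<eta> l y = it L \<eta>' l y"
    proof (cases "y < z")
      case True then show ?thesis using left by simp
    next
      case False
      show ?thesis
      proof (cases "b < y")
        case True then show ?thesis using right by simp
      next
        case False
        have yy: "yf < y" "y - yf \<le> l" "y \<le> L" using \<open>\<not> y < z\<close> False yfz z0 yfP assms(7)
          by (auto simp: l_def)
        have "it L \<eta> l y" by (rule middle[OF e0 l1 _ cond yy]) (use yfP in simp)
        moreover have "it L \<eta>' l y" by (rule middle[OF e'0 l1 ny' cond' yy])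
        ultimately show ?thesis by simp
      qed
    qed
  qed
  have eqk: "it L \<eta> (l + k) = it L \<eta>' (l + k)" for k
    by (induction k) (use eq in auto)
  have "it L \<eta> (L - 1) = it L \<eta>' (L - 1)"
  proof -
    have "l + (L - 1 - l) = L - 1" using lL by simp
    then show ?thesis using eqk[of "L - 1 - l"] by simp
  qed
  then have "Phi L \<eta>' (L - 1) 1 = one_zero L"
    using etaA Phi_it[OF assms(1)] by (simp add: Astar_def)
  moreover have "\<eta>' \<in> Omega L" using etaO z0 by (auto simp: Omega_def \<eta>'_def flip_def)
  ultimately have "\<eta>' \<in> Astar L" by (simp add: Astar_def)
  then show False using assms(5) \<eta>'_def by simp
qed

end
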